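(* Let $A,B\in\mathbb{R}_+^{n\times n}$ be two circulant matrices such that $\lambda(A)=\lambda(B)$ and $A\leq B$ (entrywise). Then $\mathrm{Attr}(A)\subseteq\mathrm{Attr}(B)$.
   Context: Max algebra: on $\mathbb{R}_+=[0,\infty)$ use $a\oplus b=\max(a,b)$ and ordinary multiplication; for nonnegative matrices $(A\otimes B)_{i,k}=\max_j A_{i,j}B_{j,k}$, and $A^t$ denotes the $t$-th max-algebraic power. A value $\lambda\in\mathbb{R}_+$ is a (max-algebraic) eigenvalue of $A\in\mathbb{R}_+^{n\times n}$ if $A\otimes x=\lambda x$ for some nonzero $x\in\mathbb{R}_+^n$; $\lambda(A)$ denotes the greatest eigenvalue, which equals the maximum cycle geometric mean $\max_{k=1}^n\max_{i_1,\dots,i_k}(A_{i_1,i_2}A_{i_2,i_3}\cdots A_{i_k,i_1})^{1/k}$. The eigencone is $V(A,\lambda)=\{x\in\mathbb{R}_+^n: A\otimes x=\lambda x\}$, and the attraction cone is $\mathrm{Attr}(A)=\{x\in\mathbb{R}_+^n:\ A^t\otimes x\in V(A,\lambda(A))\text{ for some }t\ge 0\}$ (with $A^0=I$). A matrix $A\in\mathbb{R}_+^{n\times n}$ is circulant, written $A=\mathrm{Circ}(a_0,\dots,a_{n-1})$, if $A_{i,j}=a_t$ whenever $t\in\{0,\dots,n-1\}$ and $t\equiv j-i \pmod n$. *)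

theory Defs
  imports Complex_Main
begin

(* n x n nonnegative matrices are represented as functions nat => nat => real
   (entries indexed by 0..n-1); vectors as functions nat => real that vanish
   outside {0..<n}. *)

definition nonneg_mat :: "nat \<Rightarrow> (nat \<Rightarrow> nat \<Rightarrow> real) \<Rightarrow> bool" where
  "nonneg_mat n A \<longleftrightarrow> (\<forall>i<n. \<forall>j<n. 0 \<le> A i j)"

definition vecs :: "nat \<Rightarrow> (nat \<Rightarrow> real) set" where
  "vecs n = {x. (\<forall>i<n. 0 \<le> x i) \<and> (\<forall>i\<ge>n. x i = 0)}"

definition mmult :: "nat \<Rightarrow> (nat \<Rightarrow> nat \<Rightarrow> real) \<Rightarrow> (nat \<Rightarrow> nat \<Rightarrow> real) \<Rightarrow> nat \<Rightarrow> nat \<Rightarrow> real" where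
  "mmult n A B = (\<lambda>i k. if i < n \<and> k < n then Max ((\<lambda>j. A i j * B j k) ` {..<n}) else 0)"

definition mid :: "nat \<Rightarrow> nat \<Rightarrow> nat \<Rightarrow> real" where
  "mid n = (\<lambda>i j. if i < n \<and> i = j then 1 else 0)"

fun mpow :: "nat \<Rightarrow> (nat \<Rightarrow> nat \<Rightarrow> real) \<Rightarrow> nat \<Rightarrow> nat \<Rightarrow> nat \<Rightarrow> real" where
  "mpow n A 0 = mid n"
| "mpow n A (Suc t) = mmult n A (mpow n A t)"

definition mvec :: "nat \<Rightarrow> (nat \<Rightarrow> nat \<Rightarrow> real) \<Rightarrow> (nat \<Rightarrow> real) \<Rightarrow> nat \<Rightarrow> real" where
  "mvec n A x = (\<lambda>i. if i < n then Max ((\<lambda>j. A i j * x j) ` {..<n}) else 0)"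

definition eigencone :: "nat \<Rightarrow> (nat \<Rightarrow> nat \<Rightarrow> real) \<Rightarrow> real \<Rightarrow> (nat \<Rightarrow> real) set" where
  "eigencone n A l = {x \<in> vecs n. mvec n A x = (\<lambda>i. l * x i)}"

definition is_eigenvalue :: "nat \<Rightarrow> (nat \<Rightarrow> nat \<Rightarrow> real) \<Rightarrow> real \<Rightarrow> bool" where
  "is_eigenvalue n A l \<longleftrightarrow> 0 \<le> l \<and> (\<exists>x \<in> eigencone n A l. \<exists>i<n. x i \<noteq> 0)"

definition lam :: "nat \<Rightarrow> (nat \<Rightarrow> nat \<Rightarrow> real) \<Rightarrow> real" where
  "lam n A = (GREATEST l. is_eigenvalue n A l)"

definition Attr :: "nat \<Rightarrow> (nat \<Rightarrow> nat \<Rightarrow> real) \<Rightarrow> (nat \<Rightarrow> real) set" where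
  "Attr n A = {x \<in> vecs n. \<exists>t. mvec n (mpow n A t) x \<in> eigencone n A (lam n A)}"

definition circulant :: "nat \<Rightarrow> (nat \<Rightarrow> nat \<Rightarrow> real) \<Rightarrow> bool" where
  "circulant n A \<longleftrightarrow> (\<exists>a :: nat \<Rightarrow> real. \<forall>i<n. \<forall>j<n. \<forall>t<n.
      int t mod int n = (int j - int i) mod int n \<longrightarrow> A i j = a t)"

end

theory Submission imports Defs "HOL-Number_Theory.Cong" begin

lemma max_ge: "j < n \<Longrightarrow> f j \<le> Max (f ` {..<(n::nat)})"
  by (rule Max_ge) auto
lemma max_att: "0 < n \<Longrightarrow> \<exists>j<n. Max (f ` {..<(n::nat)}) = f j"
proof -
  assume "0 < n"
  then have "Max (f ` {..<n}) \<in> f ` {..<n}" by (intro Max_in) auto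
  then show ?thesis by auto
qed
lemma max_le: "0 < n \<Longrightarrow> (\<And>j. j < n \<Longrightarrow> f j \<le> v) \<Longrightarrow> Max (f ` {..<(n::nat)}) \<le> (v::real)"
  by (subst Max_le_iff) auto

definition Cop :: "nat \<Rightarrow> (nat \<Rightarrow> real) \<Rightarrow> (nat \<Rightarrow> real) \<Rightarrow> nat \<Rightarrow> real" where
  "Cop n c w = (\<lambda>i. if i < n then Max ((\<lambda>s. c s * w ((i+s) mod n)) ` {..<n}) else 0)"

definition nn :: "nat \<Rightarrow> (nat \<Rightarrow> real) \<Rightarrow> bool" where
  "nn n c \<longleftrightarrow> (\<forall>s<n. 0 \<le> c s)"

definition it :: "nat \<Rightarrow> (nat \<Rightarrow> real) \<Rightarrow> nat \<Rightarrow> (nat \<Rightarrow> real) \<Rightarrow> nat \<Rightarrow> real" where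
  "it n c k w = (Cop n c ^^ k) w"

lemma it_0[simp]: "it n c 0 w = w" by (simp add: it_def)
lemma it_Suc: "it n c (Suc k) w = Cop n c (it n c k w)" by (simp add: it_def)
lemma it_add: "it n c (m + k) w = it n c m (it n c k w)" by (simp add: it_def funpow_add)

lemma Cop_ge: "i < n \<Longrightarrow> s < n \<Longrightarrow> c s * w ((i+s) mod n) \<le> Cop n c w i"
  unfolding Cop_def by (simp add: max_ge)
lemma Cop_att: "i < n \<Longrightarrow> \<exists>s<n. Cop n c w i = c s * w ((i+s) mod n)"
  unfolding Cop_def using max_att[of n "\<lambda>s. c s * w ((i+s) mod n)"] by simp
lemma Cop_out: "\<not> i < n \<Longrightarrow> Cop n c w i = 0" unfolding Cop_def by simp

lemma vecsI: "(\<And>i. i < n \<Longrightarrow> 0 \<le> x i) \<Longrightarrow> (\<And>i. \<not> i < n \<Longrightarrow> x i = 0) \<Longrightarrow> x \<in> vecs n"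
  unfolding vecs_def by auto
lemma vecs_nn: "x \<in> vecs n \<Longrightarrow> 0 \<le> x i"
  unfolding vecs_def by (cases "i < n") auto
lemma vecs_out: "x \<in> vecs n \<Longrightarrow> \<not> i < n \<Longrightarrow> x i = 0"
  unfolding vecs_def by auto

lemma Cop_vecs: "nn n c \<Longrightarrow> w \<in> vecs n \<Longrightarrow> Cop n c w \<in> vecs n"
proof (rule vecsI)
  fix i assume "nn n c" "w \<in> vecs n" "i < n"
  then have "c 0 * w ((i+0) mod n) \<le> Cop n c w i" by (intro Cop_ge) auto
  moreover have "0 \<le> c 0 * w ((i+0) mod n)" using \<open>nn n c\<close> \<open>w \<in> vecs n\<close> \<open>i<n\<close>
    by (simp add: nn_def vecs_nn)
  ultimately show "0 \<le> Cop n c w i" by linarith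
qed (simp add: Cop_out)

lemma it_vecs: "nn n c \<Longrightarrow> w \<in> vecs n \<Longrightarrow> it n c k w \<in> vecs n"
  by (induction k) (auto simp: it_Suc Cop_vecs)

lemma Cop_mono:
  assumes "nn n c" "\<And>s. s < n \<Longrightarrow> c s \<le> c' s" "\<And>j. w j \<le> w' j" "w \<in> vecs n"
  shows "Cop n c w i \<le> Cop n c' w' i"
proof (cases "i < n")
  case True
  then obtain s where s: "s < n" "Cop n c w i = c s * w ((i+s) mod n)" using Cop_att by blast
  have "c s * w ((i+s) mod n) \<le> c' s * w' ((i+s) mod n)"
    using assms s by (intro mult_mono) (auto simp: nn_def vecs_nn intro: order_trans)
  also have "\<dots> \<le> Cop n c' w' i" using True s by (intro Cop_ge)
  finally show ?thesis using s by simp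
qed (simp add: Cop_out)

lemma it_mono:
  assumes "nn n c" "\<And>s. s < n \<Longrightarrow> c s \<le> c' s" "\<And>j. w j \<le> w' j" "w \<in> vecs n"
  shows "it n c k w i \<le> it n c' k w' i"
  using assms(3)
proof (induction k arbitrary: i)
  case (Suc k) then show ?case unfolding it_Suc
    by (intro Cop_mono assms it_vecs) auto
qed simp

lemma Cop_scal:
  assumes "0 \<le> l" "nn n c" "w \<in> vecs n"
  shows "Cop n c (\<lambda>j. l * w j) = (\<lambda>i. l * Cop n c w i)"
proof
  fix i show "Cop n c (\<lambda>j. l * w j) i = l * Cop n c w i"
  proof (cases "i < n")
    case True
    obtain s where s: "s < n" "Cop n c (\<lambda>j. l * w j) i = c s * (l * w ((i+s) mod n))"
      using Cop_att[OF True] by blast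
    obtain u where u: "u < n" "Cop n c w i = c u * w ((i+u) mod n)"
      using Cop_att[OF True] by blast
    have "c s * (l * w ((i+s) mod n)) = l * (c s * w ((i+s) mod n))" by simp
    also have "\<dots> \<le> l * Cop n c w i" using assms True s by (intro mult_left_mono Cop_ge) auto
    finally have 1: "Cop n c (\<lambda>j. l * w j) i \<le> l * Cop n c w i" using s by simp
    have "l * Cop n c w i = c u * (l * w ((i+u) mod n))" using u by simp
    also have "\<dots> \<le> Cop n c (\<lambda>j. l * w j) i" using Cop_ge[OF True u(1), of c "\<lambda>j. l * w j"] by simp
    finally show ?thesis using 1 by simp
  qed (simp add: Cop_out)
qed

lemma it_scal:
  assumes "0 \<le> l" "nn n c" "w \<in> vecs n"
  shows "it n c k (\<lambda>j. l * w j) = (\<lambda>i. l * it n c k w i)"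
  by (induction k) (simp_all add: it_Suc Cop_scal assms it_vecs)

lemma Cop_comm_le:
  assumes "nn n a" "nn n d" "z \<in> vecs n" "i < n"
  shows "Cop n a (Cop n d z) i \<le> Cop n d (Cop n a z) i"
proof -
  obtain s where s: "s < n" "Cop n a (Cop n d z) i = a s * Cop n d z ((i+s) mod n)"
    using Cop_att[OF assms(4)] by blast
  have j: "(i+s) mod n < n" using assms(4) by simp
  obtain u where u: "u < n" "Cop n d z ((i+s) mod n) = d u * z (((i+s) mod n + u) mod n)"
    using Cop_att[OF j] by blast
  have e: "((i+s) mod n + u) mod n = ((i+u) mod n + s) mod n"
  proof -
    have "((i+s) mod n + u) mod n = (i+s+u) mod n" by (simp add: mod_add_left_eq)
    moreover have "((i+u) mod n + s) mod n = (i+u+s) mod n" by (simp add: mod_add_left_eq)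
    ultimately show ?thesis by (simp add: ac_simps)
  qed
  have "a s * Cop n d z ((i+s) mod n) = d u * (a s * z (((i+u) mod n + s) mod n))"
    using u e by simp
  also have "\<dots> \<le> d u * Cop n a z ((i+u) mod n)"
    using assms s u by (intro mult_left_mono Cop_ge) (auto simp: nn_def)
  also have "\<dots> \<le> Cop n d (Cop n a z) i" using assms u by (intro Cop_ge) auto
  finally show ?thesis using s by simp
qed

lemma Cop_comm:
  assumes "nn n a" "nn n d" "z \<in> vecs n"
  shows "Cop n a (Cop n d z) = Cop n d (Cop n a z)"
proof
  fix i show "Cop n a (Cop n d z) i = Cop n d (Cop n a z) i"
    using Cop_comm_le[OF assms(1,2,3)] Cop_comm_le[OF assms(2,1,3)]
    by (cases "i < n") (auto simp: Cop_out intro: antisym)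
qed

lemma it_Cop_comm:
  assumes "nn n a" "nn n d" "z \<in> vecs n"
  shows "it n a m (Cop n d z) = Cop n d (it n a m z)"
  by (induction m) (simp_all add: it_Suc Cop_comm assms it_vecs)

lemma it_comm:
  assumes "nn n a" "nn n d" "z \<in> vecs n"
  shows "it n a m (it n d k z) = it n d k (it n a m z)"
  by (induction k) (simp_all add: it_Suc it_Cop_comm assms it_vecs)


lemma W1:
  assumes "nn n c" "w \<in> vecs n"
  shows "(\<forall>l<k. s l < n) \<Longrightarrow> i < n \<Longrightarrow>
    (\<Prod>l<k. c (s l)) * w ((i + (\<Sum>l<k. s l)) mod n) \<le> it n c k w i"
proof (induction k arbitrary: i s)
  case 0 then show ?case by simp
next
  case (Suc k)
  define j where "j = (i + s 0) mod n"
  have jn: "j < n" using Suc.prems j_def by simp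
  have IH: "(\<Prod>l<k. c (s (Suc l))) * w ((j + (\<Sum>l<k. s (Suc l))) mod n) \<le> it n c k w j"
    using Suc.IH[of "\<lambda>l. s (Suc l)" j] Suc.prems jn by auto
  have e: "(j + (\<Sum>l<k. s (Suc l))) mod n = (i + (s 0 + (\<Sum>l<k. s (Suc l)))) mod n"
    unfolding j_def by (simp add: mod_add_left_eq add.assoc)
  have c0: "0 \<le> c (s 0)" using assms(1) Suc.prems by (auto simp: nn_def)
  have "(\<Prod>l<Suc k. c (s l)) * w ((i + (\<Sum>l<Suc k. s l)) mod n)
      = c (s 0) * ((\<Prod>l<k. c (s (Suc l))) * w ((j + (\<Sum>l<k. s (Suc l))) mod n))"
    unfolding prod.lessThan_Suc_shift sum.lessThan_Suc_shift e by simp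
  also have "\<dots> \<le> c (s 0) * it n c k w j" using IH c0 by (rule mult_left_mono)
  also have "\<dots> \<le> it n c (Suc k) w i" unfolding it_Suc j_def using Suc.prems by (intro Cop_ge) auto
  finally show ?case .
qed

lemma W2:
  assumes "nn n c" "w \<in> vecs n"
  shows "i < n \<Longrightarrow> \<exists>s. (\<forall>l<k. s l < n) \<and>
    it n c k w i = (\<Prod>l<k. c (s l)) * w ((i + (\<Sum>l<k. s l)) mod n)"
proof (induction k arbitrary: i)
  case 0 then show ?case by simp
next
  case (Suc k)
  obtain u where u: "u < n" "Cop n c (it n c k w) i = c u * it n c k w ((i+u) mod n)"
    using Cop_att[OF Suc.prems] by blast
  define j where "j = (i + u) mod n"
  have jn: "j < n" using Suc.prems j_def by simp
  obtain s' where s': "\<forall>l<k. s' l < n"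
      "it n c k w j = (\<Prod>l<k. c (s' l)) * w ((j + (\<Sum>l<k. s' l)) mod n)"
    using Suc.IH[OF jn] by blast
  define s where "s = case_nat u s'"
  have e: "(j + (\<Sum>l<k. s' l)) mod n = (i + (u + (\<Sum>l<k. s' l))) mod n"
    unfolding j_def by (simp add: mod_add_left_eq add.assoc)
  have "\<forall>l<Suc k. s l < n" using u s' by (auto simp: s_def less_Suc_eq_0_disj)
  moreover have "it n c (Suc k) w i = (\<Prod>l<Suc k. c (s l)) * w ((i + (\<Sum>l<Suc k. s l)) mod n)"
    unfolding it_Suc u(2) prod.lessThan_Suc_shift sum.lessThan_Suc_shift
    using s'(2) e by (simp add: s_def j_def)
  ultimately show ?case by blast
qed

lemma apow:
  assumes "nn n a" "w \<in> vecs n" "s0 < n" "a s0 = L" "0 \<le> L"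
  shows "i < n \<Longrightarrow> L ^ r * w ((i + r * s0) mod n) \<le> it n a r w i"
proof (induction r arbitrary: i)
  case 0 then show ?case by simp
next
  case (Suc r)
  define j where "j = (i + s0) mod n"
  have jn: "j < n" using Suc.prems j_def by simp
  have e: "(j + r * s0) mod n = (i + Suc r * s0) mod n"
    unfolding j_def by (simp add: mod_add_left_eq add.assoc)
  have "L ^ Suc r * w ((i + Suc r * s0) mod n) = L * (L ^ r * w ((j + r * s0) mod n))"
    using e by simp
  also have "\<dots> \<le> L * it n a r w j" using Suc.IH[OF jn] assms by (intro mult_left_mono) auto
  also have "\<dots> \<le> it n a (Suc r) w i" unfolding it_Suc j_def using Suc.prems assms
    by (metis Cop_ge)
  finally show ?case .
qed


lemma modcancel: "((C::nat) + Q) mod n = (C + R) mod n \<Longrightarrow> Q mod n = R mod n"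
  using cong_add_lcancel_nat[of C Q R n] unfolding cong_def by simp

lemma K:
  assumes n: "0 < n" and a: "nn n a" and d: "nn n d" and dL: "\<forall>s<n. d s \<le> L"
    and s0: "s0 < n" "a s0 = L" and L: "0 \<le> L" and z: "z \<in> vecs n" and i: "i < n"
  shows "\<exists>r. 1 \<le> r \<and> r \<le> n \<and> it n d n z i \<le> it n a r (it n d (n-r) z) i"
proof -
  obtain s where s: "\<forall>l<n. s l < n"
      "it n d n z i = (\<Prod>l<n. d (s l)) * z ((i + (\<Sum>l<n. s l)) mod n)"
    using W2[OF d z i] by blast
  define P where "P l = (\<Sum>m<l. s m)" for l
  define q where "q l = (P l + l * (n - s0)) mod n" for l
  have "\<not> inj_on q {..n}"
  proof
    assume "inj_on q {..n}"
    moreover have "q ` {..n} \<subseteq> {..<n}" using n by (auto simp: q_def)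
    ultimately have "card {..n} \<le> card {..<n}" by (intro card_inj_on_le) auto
    then show False by simp
  qed
  then obtain u v where uv: "u \<le> n" "v \<le> n" "u \<noteq> v" "q u = q v"
    unfolding inj_on_def by auto
  define a' where "a' = min u v"
  define b' where "b' = max u v"
  have ab: "a' < b'" "b' \<le> n" "q a' = q b'" using uv unfolding a'_def b'_def by auto
  define r where "r = b' - a'"
  have r: "1 \<le> r" "r \<le> n" "b' = a' + r" using ab unfolding r_def by auto
  define Q where "Q = (\<Sum>m\<in>{a'..<b'}. s m)"
  define R where "R = (\<Sum>m\<in>{b'..<n}. s m)"
  have Pb: "P b' = P a' + Q" unfolding P_def Q_def
    using sum.atLeastLessThan_concat[of 0 a' b' s] ab by (simp add: atLeast0LessThan)
  have "(\<Sum>l<n. s l) = P b' + R" unfolding P_def R_def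
    using sum.atLeastLessThan_concat[of 0 b' n s] ab by (simp add: atLeast0LessThan)
  then have Pn: "(\<Sum>l<n. s l) = P a' + Q + R" using Pb by simp
  define C where "C = P a' + a' * (n - s0)"
  have "(C + Q + r * (n - s0)) mod n = C mod n"
  proof -
    have "C + Q + r * (n - s0) = P b' + b' * (n - s0)"
      unfolding C_def Pb using r(3) by (simp add: add_mult_distrib)
    then show ?thesis using ab(3) unfolding q_def C_def by simp
  qed
  then have "(C + Q + r * (n - s0) + r * s0) mod n = (C + r * s0) mod n"
    by (metis mod_add_left_eq)
  moreover have "C + Q + r * (n - s0) + r * s0 = (C + Q) + r * n"
  proof -
    have "r * (n - s0) + r * s0 = r * n" using s0
      by (metis add_mult_distrib2 le_add_diff_inverse2 less_imp_le)
    then show ?thesis by simp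
  qed
  ultimately have "(C + Q) mod n = (C + r * s0) mod n" by simp
  then have Qc: "Q mod n = (r * s0) mod n" by (rule modcancel)
  define s' where "s' l = (if l < a' then s l else s (l + r))" for l
  have s'n: "\<forall>l<n-r. s' l < n" using s(1) r ab by (auto simp: s'_def)
  have sum': "(\<Sum>l<n-r. s' l) = P a' + R"
  proof -
    have "(\<Sum>l<n-r. s' l) = (\<Sum>l\<in>{0..<a'}. s' l) + (\<Sum>l\<in>{a'..<n-r}. s' l)"
      using sum.atLeastLessThan_concat[of 0 a' "n-r" s'] ab r by (simp add: atLeast0LessThan)
    moreover have "(\<Sum>l\<in>{0..<a'}. s' l) = P a'" unfolding P_def s'_def
      by (simp add: atLeast0LessThan)
    moreover have "(\<Sum>l\<in>{a'..<n-r}. s' l) = (\<Sum>l\<in>{a'..<n-r}. s (l + r))"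
      by (rule sum.cong) (auto simp: s'_def)
    moreover have "(\<Sum>l\<in>{a'..<n-r}. s (l + r)) = R" unfolding R_def
      using sum.shift_bounds_nat_ivl[of s a' r "n-r"] r ab by simp
    ultimately show ?thesis by simp
  qed
  define Pp where "Pp = (\<Prod>l\<in>{0..<a'}. d (s l))"
  define Qp where "Qp = (\<Prod>l\<in>{a'..<b'}. d (s l))"
  define Rp where "Rp = (\<Prod>l\<in>{b'..<n}. d (s l))"
  have prodn: "(\<Prod>l<n. d (s l)) = Pp * Qp * Rp"
  proof -
    have "(\<Prod>l<n. d (s l)) = (\<Prod>l\<in>{0..<b'}. d (s l)) * Rp" unfolding Rp_def
      using prod.atLeastLessThan_concat[of 0 b' n "\<lambda>l. d (s l)"] ab by (simp add: atLeast0LessThan)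
    moreover have "(\<Prod>l\<in>{0..<b'}. d (s l)) = Pp * Qp" unfolding Pp_def Qp_def
      using prod.atLeastLessThan_concat[of 0 a' b' "\<lambda>l. d (s l)"] ab by simp
    ultimately show ?thesis by simp
  qed
  have prod': "(\<Prod>l<n-r. d (s' l)) = Pp * Rp"
  proof -
    have "(\<Prod>l<n-r. d (s' l)) = (\<Prod>l\<in>{0..<a'}. d (s' l)) * (\<Prod>l\<in>{a'..<n-r}. d (s' l))"
      using prod.atLeastLessThan_concat[of 0 a' "n-r" "\<lambda>l. d (s' l)"] ab r by (simp add: atLeast0LessThan)
    moreover have "(\<Prod>l\<in>{0..<a'}. d (s' l)) = Pp" unfolding Pp_def s'_def
      by (rule prod.cong) auto
    moreover have "(\<Prod>l\<in>{a'..<n-r}. d (s' l)) = (\<Prod>l\<in>{a'..<n-r}. d (s (l + r)))"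
      by (rule prod.cong) (auto simp: s'_def)
    moreover have "(\<Prod>l\<in>{a'..<n-r}. d (s (l + r))) = Rp" unfolding Rp_def
      using prod.shift_bounds_nat_ivl[of "\<lambda>l. d (s l)" a' r "n-r"] r ab by simp
    ultimately show ?thesis by simp
  qed
  have Qp_le: "Qp \<le> L ^ r"
  proof -
    have "Qp \<le> (\<Prod>l\<in>{a'..<b'}. L)" unfolding Qp_def
      using s(1) ab d dL by (intro prod_mono) (auto simp: nn_def)
    then show ?thesis using r by simp
  qed
  have nnP: "0 \<le> Pp" "0 \<le> Rp" "0 \<le> Qp" unfolding Pp_def Rp_def Qp_def
    using s(1) ab d by (auto intro!: prod_nonneg simp: nn_def)
  define j0 where "j0 = (i + r * s0) mod n"
  have j0n: "j0 < n" using n by (simp add: j0_def)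
  have endp: "(j0 + (\<Sum>l<n-r. s' l)) mod n = (i + (\<Sum>l<n. s l)) mod n"
  proof -
    have "(j0 + (\<Sum>l<n-r. s' l)) mod n = (i + P a' + R + r * s0) mod n"
      unfolding j0_def sum' mod_add_left_eq by (simp add: ac_simps)
    also have "\<dots> = (i + P a' + R + Q) mod n" using Qc by (metis mod_add_right_eq)
    also have "\<dots> = (i + (\<Sum>l<n. s l)) mod n" unfolding Pn by (simp add: ac_simps)
    finally show ?thesis .
  qed
  define ze where "ze = z ((i + (\<Sum>l<n. s l)) mod n)"
  have zenn: "0 \<le> ze" unfolding ze_def using z by (simp add: vecs_nn)
  have "it n d n z i = Qp * (Pp * Rp * ze)" using s(2) prodn unfolding ze_def by simp
  also have "\<dots> \<le> L ^ r * (Pp * Rp * ze)" using Qp_le nnP zenn by (intro mult_right_mono) auto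
  also have "Pp * Rp * ze \<le> it n d (n-r) z j0"
    using W1[OF d z s'n j0n] unfolding prod' endp ze_def .
  then have "L ^ r * (Pp * Rp * ze) \<le> L ^ r * it n d (n-r) z j0" using L by (intro mult_left_mono) auto
  also have "\<dots> \<le> it n a r (it n d (n-r) z) i" unfolding j0_def
    using apow[OF a it_vecs[OF d z] s0 L i] .
  finally show ?thesis using r by blast
qed


lemma K2:
  assumes n: "0 < n" and a: "nn n a" and d: "nn n d" and dL: "\<forall>s<n. d s \<le> L"
    and s0: "s0 < n" "a s0 = L" and L: "0 \<le> L" and z: "z \<in> vecs n"
  shows "i < n \<Longrightarrow> \<exists>r. 1 \<le> r \<and> r \<le> n \<and> it n a m (it n d n z) i \<le> it n a (m + r) (it n d (n-r) z) i"
proof (induction m arbitrary: i)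
  case 0 then show ?case using K[OF assms] by simp
next
  case (Suc m)
  obtain s where s: "s < n" "Cop n a (it n a m (it n d n z)) i = a s * it n a m (it n d n z) ((i+s) mod n)"
    using Cop_att[OF Suc.prems] by blast
  have jn: "(i+s) mod n < n" using n by simp
  obtain r where r: "1 \<le> r" "r \<le> n" "it n a m (it n d n z) ((i+s) mod n) \<le> it n a (m + r) (it n d (n-r) z) ((i+s) mod n)"
    using Suc.IH[OF jn] by blast
  have "it n a (Suc m) (it n d n z) i = a s * it n a m (it n d n z) ((i+s) mod n)"
    using s by (simp add: it_Suc)
  also have "\<dots> \<le> a s * it n a (m + r) (it n d (n-r) z) ((i+s) mod n)"
    using r a s by (intro mult_left_mono) (auto simp: nn_def)
  also have "\<dots> \<le> it n a (Suc m + r) (it n d (n-r) z) i"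
    using Cop_ge[OF Suc.prems s(1)] by (simp add: it_Suc)
  finally show ?case using r by blast
qed

lemma Dom:
  assumes n: "0 < n" and a: "nn n a" and d: "nn n d" and dL: "\<forall>s<n. d s \<le> L"
    and s0: "s0 < n" "a s0 = L" and L: "0 \<le> L" and x: "x \<in> vecs n"
    and N: "T0 + n \<le> N"
  shows "k \<le> N \<Longrightarrow> i < n \<Longrightarrow> \<exists>k'\<le>N - T0. it n a (N-k) (it n d k x) i \<le> it n a (N-k') (it n d k' x) i"
proof (induction k arbitrary: i rule: less_induct)
  case (less k)
  show ?case
  proof (cases "k \<le> N - T0")
    case True then show ?thesis by blast
  next
    case False
    then have kn: "n \<le> k" using N by linarith
    define z where "z = it n d (k-n) x"
    have z: "z \<in> vecs n" unfolding z_def using d x by (rule it_vecs)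
    have dk: "it n d k x = it n d n z" unfolding z_def it_add[symmetric] using kn by simp
    obtain r where r: "1 \<le> r" "r \<le> n" "it n a (N-k) (it n d n z) i \<le> it n a (N-k + r) (it n d (n-r) z) i"
      using K2[OF n a d dL s0 L z less.prems(2)] by blast
    have e1: "it n d (n-r) z = it n d (k-r) x" unfolding z_def it_add[symmetric]
      using kn r by (simp)
    have e2: "N - k + r = N - (k - r)" using less.prems kn r by linarith
    obtain k' where k': "k' \<le> N - T0" "it n a (N-(k-r)) (it n d (k-r) x) i \<le> it n a (N-k') (it n d k' x) i"
    proof -
      have "k - r < k" "k - r \<le> N" using r kn less.prems by auto
      from less.IH[OF this less.prems(2)] show ?thesis using that by blast
    qed
    have "it n a (N-k) (it n d k x) i \<le> it n a (N - (k - r)) (it n d (k-r) x) i"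
      using r(3) unfolding dk e1 e2 .
    then have "it n a (N-k) (it n d k x) i \<le> it n a (N-k') (it n d k' x) i" using k'(2) by (rule order_trans)
    then show ?thesis using k'(1) by blast
  qed
qed

lemma Bin:
  assumes n: "0 < n" and a: "nn n a" and d: "nn n d" and b: "nn n b"
    and bad: "\<forall>s<n. b s = a s \<or> b s = d s" and x: "x \<in> vecs n"
  shows "i < n \<Longrightarrow> \<exists>k\<le>t. it n b t x i \<le> it n a (t-k) (it n d k x) i"
proof (induction t arbitrary: i)
  case 0 then show ?case by simp
next
  case (Suc t)
  obtain s where s: "s < n" "Cop n b (it n b t x) i = b s * it n b t x ((i+s) mod n)"
    using Cop_att[OF Suc.prems] by blast
  have jn: "(i+s) mod n < n" using n by simp
  obtain k where k: "k \<le> t" "it n b t x ((i+s) mod n) \<le> it n a (t-k) (it n d k x) ((i+s) mod n)"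
    using Suc.IH[OF jn] by blast
  have bs: "0 \<le> b s" using b s by (simp add: nn_def)
  have "it n b (Suc t) x i = b s * it n b t x ((i+s) mod n)" using s by (simp add: it_Suc)
  also have "\<dots> \<le> b s * it n a (t-k) (it n d k x) ((i+s) mod n)"
    using k(2) bs by (rule mult_left_mono)
  finally have c0: "it n b (Suc t) x i \<le> b s * it n a (t-k) (it n d k x) ((i+s) mod n)" .
  consider "b s = a s" | "b s = d s" using bad s by blast
  then show ?case
  proof cases
    case 1
    have "b s * it n a (t-k) (it n d k x) ((i+s) mod n) \<le> it n a (Suc t - k) (it n d k x) i"
      using Cop_ge[OF Suc.prems s(1), of a "it n a (t-k) (it n d k x)"] k 1
      by (simp add: it_Suc Suc_diff_le)
    with c0 have "it n b (Suc t) x i \<le> it n a (Suc t - k) (it n d k x) i" by (rule order_trans)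
    then show ?thesis using k(1) by (intro exI[of _ k]) simp
  next
    case 2
    have "b s * it n a (t-k) (it n d k x) ((i+s) mod n) \<le> Cop n d (it n a (t-k) (it n d k x)) i"
      using Cop_ge[OF Suc.prems s(1), of d "it n a (t-k) (it n d k x)"] 2 by simp
    also have "\<dots> = it n a (Suc t - Suc k) (it n d (Suc k) x) i"
      using it_Cop_comm[OF a d it_vecs[OF d x], of "t-k"] by (simp add: it_Suc)
    finally have "b s * it n a (t-k) (it n d k x) ((i+s) mod n) \<le> it n a (Suc t - Suc k) (it n d (Suc k) x) i" .
    with c0 have "it n b (Suc t) x i \<le> it n a (Suc t - Suc k) (it n d (Suc k) x) i" by (rule order_trans)
    then show ?thesis using k(1) by (intro exI[of _ "Suc k"]) simp
  qed
qed

lemma BinGe: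
  assumes a: "nn n a" and d: "nn n d" and ab: "\<forall>s<n. a s \<le> b s" and db: "\<forall>s<n. d s \<le> b s"
    and x: "x \<in> vecs n"
  shows "it n a m (it n d k x) i \<le> it n b (m + k) x i"
proof -
  have "it n a m (it n d k x) i \<le> it n b m (it n b k x) i"
    using ab db x d by (intro it_mono a it_vecs) auto
  then show ?thesis by (simp add: it_add)
qed

lemma main_abs:
  assumes n: "0 < n" and a: "nn n a" and b: "nn n b" and ab: "\<forall>s<n. a s \<le> b s"
    and bL: "\<forall>s<n. b s \<le> L" and s0: "s0 < n" "a s0 = L" and L: "0 \<le> L" and x: "x \<in> vecs n"
    and T: "it n a (Suc T) x = (\<lambda>i. L * it n a T x i)"
  shows "it n b (Suc (T + n)) x = (\<lambda>i. L * it n b (T + n) x i)"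
proof -
  define t where "t = T + n"
  define d where "d s = (if a s = b s then 0 else b s)" for s
  have d: "nn n d" using b by (auto simp: nn_def d_def)
  have dL: "\<forall>s<n. d s \<le> L" using bL L by (auto simp: d_def)
  have db: "\<forall>s<n. d s \<le> b s" using b by (auto simp: d_def nn_def)
  have bad: "\<forall>s<n. b s = a s \<or> b s = d s" by (auto simp: d_def)
  have E: "m \<ge> T \<Longrightarrow> it n a (Suc m) x = (\<lambda>i. L * it n a m x i)" for m
  proof (induction m rule: dec_induct)
    case base then show ?case by (rule T)
  next
    case (step m)
    have "it n a (Suc (Suc m)) x = Cop n a (\<lambda>i. L * it n a m x i)" using step.IH by (simp add: it_Suc)
    also have "\<dots> = (\<lambda>i. L * it n a (Suc m) x i)" using Cop_scal[OF L a it_vecs[OF a x]] by (simp add: it_Suc)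
    finally show ?case .
  qed
  have F: "m \<ge> T \<Longrightarrow> it n a (Suc m) (it n d k x) i = L * it n a m (it n d k x) i" for m k i
  proof -
    assume m: "m \<ge> T"
    have "it n a (Suc m) (it n d k x) = it n d k (it n a (Suc m) x)" by (rule it_comm[OF a d x])
    also have "\<dots> = it n d k (\<lambda>i. L * it n a m x i)" using E[OF m] by simp
    also have "\<dots> = (\<lambda>i. L * it n d k (it n a m x) i)" by (rule it_scal[OF L d it_vecs[OF a x]])
    also have "\<dots> = (\<lambda>i. L * it n a m (it n d k x) i)" using it_comm[OF a d x] by simp
    finally show ?thesis by simp
  qed
  show ?thesis unfolding t_def[symmetric]
  proof
    fix i show "it n b (Suc t) x i = L * it n b t x i"
    proof (cases "i < n")
      case False then show ?thesis
        using vecs_out[OF it_vecs[OF b x]] by simp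
    next
      case True
      obtain k where k: "k \<le> t" "it n b t x i \<le> it n a (t-k) (it n d k x) i"
        using Bin[OF n a d b bad x True] by blast
      obtain k' where k': "k' \<le> t - T" "it n a (t-k) (it n d k x) i \<le> it n a (t-k') (it n d k' x) i"
        using Dom[OF n a d dL s0 L x, of T t k i] k True by (auto simp: t_def)
      have "L * it n b t x i \<le> L * it n a (t-k') (it n d k' x) i"
        using k k' L by (intro mult_left_mono) auto
      also have "\<dots> = it n a (Suc (t-k')) (it n d k' x) i"
      proof -
        have "T \<le> t - k'" using k'(1) by (simp add: t_def)
        from F[OF this] show ?thesis by simp
      qed
      also have "\<dots> \<le> it n b (Suc (t-k') + k') x i" by (rule BinGe[OF a d ab db x])
      also have "Suc (t-k') + k' = Suc t" using k' by simp
      finally have 1: "L * it n b t x i \<le> it n b (Suc t) x i" .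
      obtain k2 where k2: "k2 \<le> Suc t" "it n b (Suc t) x i \<le> it n a (Suc t-k2) (it n d k2 x) i"
        using Bin[OF n a d b bad x True] by blast
      obtain k3 where k3: "k3 \<le> Suc t - Suc T" "it n a (Suc t-k2) (it n d k2 x) i \<le> it n a (Suc t-k3) (it n d k3 x) i"
        using Dom[OF n a d dL s0 L x, of "Suc T" "Suc t" k2 i] k2 True by (auto simp: t_def)
      have "it n a (Suc t-k3) (it n d k3 x) i = it n a (Suc (t-k3)) (it n d k3 x) i"
        using k3 by (simp add: Suc_diff_le t_def)
      also have "\<dots> = L * it n a (t-k3) (it n d k3 x) i"
      proof -
        have "T \<le> t - k3" using k3(1) by (simp add: t_def)
        from F[OF this] show ?thesis by simp
      qed
      also have "\<dots> \<le> L * it n b (t - k3 + k3) x i"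
        using L by (intro mult_left_mono BinGe[OF a d ab db x])
      also have "t - k3 + k3 = t" using k3 by (simp add: t_def)
      finally have 2: "it n b (Suc t) x i \<le> L * it n b t x i" using k2 k3 by simp
      show ?thesis using 1 2 by simp
    qed
  qed
qed


lemma mvec_mid: assumes "0 < n" "x \<in> vecs n" shows "mvec n (mid n) x = x"
proof
  fix i show "mvec n (mid n) x i = x i"
  proof (cases "i < n")
    case True
    have "Max ((\<lambda>j. mid n i j * x j) ` {..<n}) \<le> x i"
      using assms True by (intro max_le) (auto simp: mid_def vecs_nn)
    moreover have "x i \<le> Max ((\<lambda>j. mid n i j * x j) ` {..<n})"
      using max_ge[OF True, of "\<lambda>j. mid n i j * x j"] True by (simp add: mid_def)
    ultimately show ?thesis using True by (simp add: mvec_def)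
  qed (use assms in \<open>simp add: mvec_def vecs_out\<close>)
qed

lemma mmult_nonneg: assumes "0 < n" "nonneg_mat n A" "nonneg_mat n M" shows "nonneg_mat n (mmult n A M)"
  unfolding nonneg_mat_def
proof (intro allI impI)
  fix i k assume ik: "i < n" "k < n"
  have "A i 0 * M 0 k \<le> Max ((\<lambda>j. A i j * M j k) ` {..<n})" using assms by (intro max_ge) auto
  moreover have "0 \<le> A i 0 * M 0 k" using assms ik by (auto simp: nonneg_mat_def)
  ultimately have "0 \<le> Max ((\<lambda>j. A i j * M j k) ` {..<n})" by linarith
  then show "0 \<le> mmult n A M i k" using ik by (simp add: mmult_def)
qed

lemma mpow_nonneg: assumes "0 < n" "nonneg_mat n A" shows "nonneg_mat n (mpow n A t)"
  by (induction t) (auto simp: mid_def nonneg_mat_def intro!: mmult_nonneg[OF assms(1,2), unfolded nonneg_mat_def])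

lemma mvec_ge: "i < n \<Longrightarrow> j < n \<Longrightarrow> A i j * x j \<le> mvec n A x i"
  unfolding mvec_def by (simp add: max_ge)
lemma mvec_att: "0 < n \<Longrightarrow> i < n \<Longrightarrow> \<exists>j<n. mvec n A x i = A i j * x j"
  unfolding mvec_def using max_att[of n "\<lambda>j. A i j * x j"] by simp
lemma mmult_ge: "i < n \<Longrightarrow> j < n \<Longrightarrow> k < n \<Longrightarrow> A i j * M j k \<le> mmult n A M i k"
  unfolding mmult_def by (simp add: max_ge)
lemma mmult_att: "0 < n \<Longrightarrow> i < n \<Longrightarrow> k < n \<Longrightarrow> \<exists>j<n. mmult n A M i k = A i j * M j k"
  unfolding mmult_def using max_att[of n "\<lambda>j. A i j * M j k"] by simp

lemma mvec_mmult:
  assumes n: "0 < n" and A: "nonneg_mat n A" and M: "nonneg_mat n M" and x: "x \<in> vecs n"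
  shows "mvec n (mmult n A M) x = mvec n A (mvec n M x)"
proof
  fix i show "mvec n (mmult n A M) x i = mvec n A (mvec n M x) i"
  proof (cases "i < n")
    case i: True
    obtain k where k: "k < n" "mvec n (mmult n A M) x i = mmult n A M i k * x k" using mvec_att[OF n i] by blast
    obtain j where j: "j < n" "mmult n A M i k = A i j * M j k" using mmult_att[OF n i k(1)] by blast
    have "mvec n (mmult n A M) x i = A i j * (M j k * x k)" using k j by simp
    also have "\<dots> \<le> A i j * mvec n M x j" using A i j k by (intro mult_left_mono mvec_ge) (auto simp: nonneg_mat_def)
    also have "\<dots> \<le> mvec n A (mvec n M x) i" by (rule mvec_ge[OF i j(1)])
    finally have 1: "mvec n (mmult n A M) x i \<le> mvec n A (mvec n M x) i" .
    obtain j2 where j2: "j2 < n" "mvec n A (mvec n M x) i = A i j2 * mvec n M x j2" using mvec_att[OF n i] by blast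
    obtain k2 where k2: "k2 < n" "mvec n M x j2 = M j2 k2 * x k2" using mvec_att[OF n j2(1)] by blast
    have "mvec n A (mvec n M x) i = (A i j2 * M j2 k2) * x k2" using j2 k2 by simp
    also have "\<dots> \<le> mmult n A M i k2 * x k2" using x i j2 k2 by (intro mult_right_mono mmult_ge) (auto simp: vecs_nn)
    also have "\<dots> \<le> mvec n (mmult n A M) x i" by (rule mvec_ge[OF i k2(1)])
    finally show ?thesis using 1 by simp
  qed (simp add: mvec_def)
qed

lemma circ_rep:
  assumes "circulant n A" "i < n" "s < n"
  shows "A i ((i+s) mod n) = A 0 s"
proof -
  obtain a where a: "\<forall>i<n. \<forall>j<n. \<forall>t<n. int t mod int n = (int j - int i) mod int n \<longrightarrow> A i j = a t"
    using assms(1) unfolding circulant_def by blast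
  have "int s mod int n = (int ((i+s) mod n) - int i) mod int n"
    by (simp add: zmod_int mod_diff_left_eq)
  then have 1: "A i ((i+s) mod n) = a s" using a assms by auto
  have "A 0 s = a s" using a assms by auto
  with 1 show ?thesis by simp
qed

lemma mvec_Cop:
  assumes "circulant n A"
  shows "mvec n A z = Cop n (\<lambda>s. A 0 s) z"
proof
  fix i show "mvec n A z i = Cop n (\<lambda>s. A 0 s) z i"
  proof (cases "i < n")
    case True
    have im: "(\<lambda>s. (i+s) mod n) ` {..<n} = {..<n}"
    proof
      show "(\<lambda>s. (i+s) mod n) ` {..<n} \<subseteq> {..<n}" using True by auto
      show "{..<n} \<subseteq> (\<lambda>s. (i+s) mod n) ` {..<n}"
      proof
        fix j assume j: "j \<in> {..<n}"
        have "(i + (j + n - i) mod n) mod n = (i + (j + n - i)) mod n" by (simp add: mod_add_right_eq)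
        also have "i + (j + n - i) = j + n" using True by simp
        also have "(j + n) mod n = j" using j by simp
        finally show "j \<in> (\<lambda>s. (i+s) mod n) ` {..<n}" using True
          by (intro image_eqI[of _ _ "(j + n - i) mod n"]) auto
      qed
    qed
    have "(\<lambda>j. A i j * z j) ` {..<n} = (\<lambda>j. A i j * z j) ` ((\<lambda>s. (i+s) mod n) ` {..<n})"
      using im by simp
    also have "\<dots> = (\<lambda>s. A 0 s * z ((i+s) mod n)) ` {..<n}"
      unfolding image_image using circ_rep[OF assms True] by (intro image_cong) auto
    finally show ?thesis using True by (simp add: mvec_def Cop_def)
  qed (simp add: mvec_def Cop_def)
qed

lemma nn_circ: "nonneg_mat n A \<Longrightarrow> 0 < n \<Longrightarrow> nn n (\<lambda>s. A 0 s)"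
  by (auto simp: nonneg_mat_def nn_def)

lemma mvec_mpow:
  assumes n: "0 < n" and A: "nonneg_mat n A" "circulant n A" and x: "x \<in> vecs n"
  shows "mvec n (mpow n A t) x = it n (\<lambda>s. A 0 s) t x"
proof (induction t)
  case 0 then show ?case using mvec_mid[OF n x] by simp
next
  case (Suc t)
  have "mvec n (mpow n A (Suc t)) x = mvec n A (mvec n (mpow n A t) x)"
    using mvec_mmult[OF n A(1) mpow_nonneg[OF n A(1)] x] by simp
  also have "\<dots> = it n (\<lambda>s. A 0 s) (Suc t) x" using Suc mvec_Cop[OF A(2)] by (simp add: it_Suc)
  finally show ?case .
qed

lemma lam_eq:
  assumes n: "0 < n" and A: "nonneg_mat n A" "circulant n A"
  shows "lam n A = Max ((\<lambda>s. A 0 s) ` {..<n})"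
proof -
  define m where "m = Max ((\<lambda>s. A 0 s) ` {..<n})"
  have mge: "s < n \<Longrightarrow> A 0 s \<le> m" for s unfolding m_def by (rule max_ge)
  have m0: "0 \<le> m" using mge[of 0] A n by (auto simp: nonneg_mat_def intro: order_trans)
  have "is_eigenvalue n A m"
    unfolding is_eigenvalue_def
  proof (intro conjI m0 bexI)
    define e where "e = (\<lambda>i::nat. if i < n then 1 else (0::real))"
    show "\<exists>i<n. e i \<noteq> 0" using n by (auto simp: e_def)
    have ev: "e \<in> vecs n" by (auto simp: e_def vecs_def)
    have "mvec n A e = (\<lambda>i. m * e i)"
    proof
      fix i show "mvec n A e i = m * e i"
      proof (cases "i < n")
        case True
        have "(\<lambda>s. A 0 s * e ((i+s) mod n)) ` {..<n} = (\<lambda>s. A 0 s) ` {..<n}"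
          using n by (intro image_cong) (auto simp: e_def)
        then show ?thesis using True by (simp add: mvec_Cop[OF A(2)] Cop_def m_def e_def)
      qed (simp add: mvec_def e_def)
    qed
    then show "e \<in> eigencone n A m" using ev by (simp add: eigencone_def)
  qed
  moreover have "l \<le> m" if "is_eigenvalue n A l" for l
  proof -
    from that obtain x where x0: "x \<in> eigencone n A l" "\<exists>i<n. x i \<noteq> 0"
      unfolding is_eigenvalue_def by blast
    then obtain i where x: "x \<in> eigencone n A l" "i < n" "x i \<noteq> 0" by blast
    have xv: "x \<in> vecs n" and xe: "mvec n A x = (\<lambda>i. l * x i)" using x by (auto simp: eigencone_def)
    obtain i0 where i0: "i0 < n" "Max (x ` {..<n}) = x i0" using max_att[OF n, of x] by blast
    have xle: "j < n \<Longrightarrow> x j \<le> x i0" for j using max_ge[of j n x] i0 by simp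
    have "0 < x i" using x xv vecs_nn[OF xv, of i] by linarith
    then have pos: "0 < x i0" using xle[OF x(2)] by linarith
    obtain s where s: "s < n" "Cop n (\<lambda>s. A 0 s) x i0 = A 0 s * x ((i0+s) mod n)"
      using Cop_att[OF i0(1)] by blast
    have "l * x i0 = A 0 s * x ((i0+s) mod n)" using s xe mvec_Cop[OF A(2)] by metis
    also have "\<dots> \<le> m * x i0" using mge[OF s(1)] xle[of "(i0+s) mod n"] n m0 A s(1) xv
      by (intro mult_mono) (auto simp: nonneg_mat_def vecs_nn)
    finally show ?thesis using pos by simp
  qed
  ultimately show ?thesis unfolding lam_def m_def[symmetric] by (rule Greatest_equality)
qed

theorem theorem3:
  fixes n :: nat and A B :: "nat \<Rightarrow> nat \<Rightarrow> real"
  assumes "0 < n"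
    and "nonneg_mat n A" and "nonneg_mat n B"
    and "circulant n A" and "circulant n B"
    and "lam n A = lam n B"
    and "\<forall>i<n. \<forall>j<n. A i j \<le> B i j"
  shows "Attr n A \<subseteq> Attr n B"
proof
  fix x assume "x \<in> Attr n A"
  then obtain T where x: "x \<in> vecs n" and T: "mvec n (mpow n A T) x \<in> eigencone n A (lam n A)"
    by (auto simp: Attr_def)
  define a where "a s = A 0 s" for s
  define b where "b s = B 0 s" for s
  define L where "L = lam n A"
  have n: "0 < n" by fact
  have aeq: "A 0 = a" "(\<lambda>s. A 0 s) = a" by (auto simp: a_def)
  have beq: "B 0 = b" "(\<lambda>s. B 0 s) = b" by (auto simp: b_def)
  have a: "nn n a" and b: "nn n b" using assms by (auto simp: a_def b_def nn_def nonneg_mat_def)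
  have ab: "\<forall>s<n. a s \<le> b s" using assms(7) n by (auto simp: a_def b_def)
  have LA: "L = Max (a ` {..<n})" unfolding L_def a_def using lam_eq[OF n assms(2,4)] by simp
  have LB: "L = Max (b ` {..<n})" unfolding L_def b_def using lam_eq[OF n assms(3,5)] assms(6) by simp
  have bL: "\<forall>s<n. b s \<le> L" unfolding LB by (auto intro: max_ge)
  obtain s0 where s0: "s0 < n" "a s0 = L" using max_att[OF n, of a] LA by metis
  have L: "0 \<le> L" using s0 a by (auto simp: nn_def)
  have itA: "mvec n (mpow n A t) x = it n a t x" for t
    using mvec_mpow[OF n assms(2,4) x] by (simp add: aeq)
  have itB: "mvec n (mpow n B t) x = it n b t x" for t
    using mvec_mpow[OF n assms(3,5) x] by (simp add: beq)
  have mA: "mvec n A z = Cop n a z" for z using mvec_Cop[OF assms(4)] by (simp add: aeq)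
  have mB: "mvec n B z = Cop n b z" for z using mvec_Cop[OF assms(5)] by (simp add: beq)
  have TT: "it n a (Suc T) x = (\<lambda>i. L * it n a T x i)"
    using T unfolding itA eigencone_def L_def[symmetric] by (simp add: mA it_Suc)
  have M: "it n b (Suc (T + n)) x = (\<lambda>i. L * it n b (T + n) x i)"
    by (rule main_abs[OF n a b ab bL s0 L x TT])
  have "mvec n (mpow n B (T + n)) x \<in> eigencone n B (lam n B)"
    unfolding itB eigencone_def assms(6)[symmetric] L_def[symmetric]
    using M it_vecs[OF b x] by (simp add: mB it_Suc)
  then show "x \<in> Attr n B" using x by (auto simp: Attr_def)
qed

end
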